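(* Let $g\in\mathcal{G}$. Then $g$ is predictable if and only if for every sub-polynomial function $\epsilon>0$ there exists a sub-polynomial function $h$ such that for all $x\in\mathbb{N}$ and all $y\in[1,x/h(x))$ satisfying $x+y\notin\delta_{\epsilon(x)}(g,x)$ it holds that $g(y)\ge g(x)/h(x)$.
   Context: $\mathcal{G}=\{g:\mathbb{Z}_{\ge0}\to\mathbb{R}: g(0)=0,\ g(1)=1,\ g(x)>0\ \forall x>0\}$. A function $f:\mathbb{R}_{\ge0}\to\mathbb{R}_{\ge0}$ is sub-polynomial if for every $\alpha>0$, $\lim_{x\to\infty}x^\alpha f(x)=\infty$ and $\lim_{x\to\infty}x^{-\alpha}f(x)=0$. For $x\in\mathbb{N}$ and $\epsilon>0$ let $\delta_\epsilon(g,x)=\{y\in\mathbb{N}: |g(y)-g(x)|\le\epsilon g(x)\}$. $g$ is predictable if for every $0<\gamma<1$ and every sub-polynomial $\epsilon$ there is $N$ such that for all $x\ge N$ and all $y\in[1,x^{1-\gamma})$ with $x+y\notin\delta_{\epsilon(x)}(g,x)$ we have $g(y)\ge x^{-\gamma}g(x)$. *)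

theory Defs
  imports "HOL-Analysis.Analysis"
begin

definition in_G :: "(nat \<Rightarrow> real) \<Rightarrow> bool" where
  "in_G g \<longleftrightarrow> g 0 = 0 \<and> g 1 = 1 \<and> (\<forall>x>0. g x > 0)"

definition subpoly :: "(real \<Rightarrow> real) \<Rightarrow> bool" where
  "subpoly f \<longleftrightarrow> (\<forall>x\<ge>0. f x \<ge> 0) \<and>
     (\<forall>\<alpha>>0. filterlim (\<lambda>x. x powr \<alpha> * f x) at_top at_top \<and>
             ((\<lambda>x. x powr (-\<alpha>) * f x) \<longlongrightarrow> 0) at_top)"

definition delta :: "real \<Rightarrow> (nat \<Rightarrow> real) \<Rightarrow> nat \<Rightarrow> nat set" where
  "delta \<epsilon> g x = {y. y \<ge> 1 \<and> \<bar>g y - g x\<bar> \<le> \<epsilon> * g x}"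

definition predictable :: "(nat \<Rightarrow> real) \<Rightarrow> bool" where
  "predictable g \<longleftrightarrow>
     (\<forall>\<gamma>::real. 0 < \<gamma> \<and> \<gamma> < 1 \<longrightarrow>
       (\<forall>\<epsilon>. subpoly \<epsilon> \<longrightarrow>
         (\<exists>N::nat. \<forall>x\<ge>N. \<forall>y::nat.
            1 \<le> real y \<and> real y < real x powr (1 - \<gamma>) \<and>
            x + y \<notin> delta (\<epsilon> (real x)) g x
            \<longrightarrow> g y \<ge> real x powr (-\<gamma>) * g x)))"

end

theory Submission
  imports Defs "HOL-Real_Asymp.Real_Asymp"
begin

lemma pred_dir:
  fixes g :: "nat \<Rightarrow> real" and \<epsilon> :: "real \<Rightarrow> real"
  assumes pr: "predictable g" and se: "subpoly \<epsilon>"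
  shows "\<exists>h. subpoly h \<and>
        (\<forall>x::nat. \<forall>y::nat. 1 \<le> x \<and> 1 \<le> y \<and> real y < real x / h (real x) \<and>
           x + y \<notin> delta (\<epsilon> (real x)) g x
           \<longrightarrow> g y \<ge> g x / h (real x))"
proof -
  define P where "P = (\<lambda>k (N::nat). \<forall>x\<ge>N. \<forall>y::nat.
            1 \<le> real y \<and> real y < real x powr (1 - 1 / (real k + 2)) \<and>
            x + y \<notin> delta (\<epsilon> (real x)) g x
            \<longrightarrow> g y \<ge> real x powr (-(1 / (real k + 2))) * g x)"
  have "\<forall>k. \<exists>N. P k N"
  proof
    fix k :: nat
    have "0 < 1 / (real k + 2)" "1 / (real k + 2) < (1::real)" by (auto simp: field_simps)
    then show "\<exists>N. P k N" using pr se unfolding predictable_def P_def by blast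
  qed
  then obtain N where N: "\<And>k. P k (N k)" by metis
  define M where "M k = (\<Sum>i\<le>k. N i) + k" for k
  have PM: "P k (M k)" for k
  proof -
    have "N k \<le> M k" unfolding M_def using sum_mono2[of "{..k}" "{k}" N] by auto
    then show ?thesis using N[of k] unfolding P_def by (meson le_trans)
  qed
  have Mmono: "M i \<le> M j" if "i \<le> j" for i j
  proof -
    have "(\<Sum>i\<le>i. N i) \<le> (\<Sum>i\<le>j. N i)" using that by (intro sum_mono2) auto
    then show ?thesis unfolding M_def using that by simp
  qed
  have Mge: "k \<le> M k" for k unfolding M_def by simp
  define S where "S x = {k. 0 < k \<and> real (M k) \<le> x}" for x :: real
  define K where "K x = card (S x)" for x
  have finS: "finite (S x)" for x
  proof -
    have "S x \<subseteq> {..nat \<lceil>x\<rceil>}"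
    proof
      fix k assume "k \<in> S x"
      then have "real k \<le> x" using Mge[of k] unfolding S_def by (auto intro: order_trans)
      then show "k \<in> {..nat \<lceil>x\<rceil>}" by (simp add: le_nat_iff, linarith)
    qed
    then show ?thesis using finite_subset by blast
  qed
  have KM: "real (M (K x)) \<le> x" if "real (M 0) \<le> x" for x
  proof (cases "S x = {}")
    case True then show ?thesis using that unfolding K_def by simp
  next
    case False
    define m where "m = Max (S x)"
    have mS: "m \<in> S x" unfolding m_def using False finS Max_in by blast
    have "S x \<subseteq> {1..m}" unfolding m_def using finS by (auto simp: S_def)
    then have "K x \<le> m" unfolding K_def by (metis card_atLeastAtMost card_mono diff_Suc_1 finite_atLeastAtMost)
    then have "M (K x) \<le> M m" by (rule Mmono)
    then show ?thesis using mS unfolding S_def by auto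
  qed
  have Kge: "j \<le> K x" if "real (M j) \<le> x" for j x
  proof -
    have "{1..j} \<subseteq> S x" unfolding S_def
    proof (rule subsetI)
      fix k assume "k \<in> {1..j}"
      then have k: "1 \<le> k" "k \<le> j" by auto
      have "M k \<le> M j" by (rule Mmono) (rule k(2))
      then have "real (M k) \<le> x" using that by linarith
      then show "k \<in> {k. 0 < k \<and> real (M k) \<le> x}" using k(1) by simp
    qed
    then have "card {1..j} \<le> card (S x)" by (rule card_mono[OF finS])
    then show ?thesis unfolding K_def by simp
  qed
  define h where "h x = (if x < real (M 0) then 0 else x powr (1 / (real (K x) + 2)))" for x
  have hge: "1 \<le> h x" if "real (M 0) \<le> x" "1 \<le> x" for x
    using that unfolding h_def by (simp add: ge_one_powr_ge_zero)
  have sub: "subpoly h"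
    unfolding subpoly_def
  proof (intro conjI allI impI)
    fix x :: real assume "0 \<le> x" then show "0 \<le> h x" unfolding h_def by simp
  next
    fix \<alpha> :: real assume a: "0 < \<alpha>"
    have lim: "filterlim (\<lambda>x::real. x powr \<alpha>) at_top at_top" using a by real_asymp
    show "filterlim (\<lambda>x. x powr \<alpha> * h x) at_top at_top"
    proof (rule filterlim_at_top_mono[OF lim])
      show "\<forall>\<^sub>F x in at_top. x powr \<alpha> \<le> x powr \<alpha> * h x"
        using eventually_ge_at_top[of "max (real (M 0)) 1"]
      proof eventually_elim
        case (elim x)
        then have "1 \<le> h x" using hge by auto
        then show ?case by (simp add: mult_le_cancel_left1)
      qed
    qed
    obtain j :: nat where j: "1 / (real j + 2) \<le> \<alpha> / 2"
    proof -
      obtain n :: nat where "2 / \<alpha> < real n" using reals_Archimedean2 by blast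
      then have "1 / (real n + 2) \<le> \<alpha> / 2" using a by (simp add: field_simps)
      then show ?thesis using that by blast
    qed
    have lim0: "((\<lambda>x::real. x powr (-(\<alpha>/2))) \<longlongrightarrow> 0) at_top" using a by real_asymp
    show "((\<lambda>x. x powr - \<alpha> * h x) \<longlongrightarrow> 0) at_top"
    proof (rule tendsto_sandwich[OF _ _ tendsto_const lim0])
      show "\<forall>\<^sub>F x in at_top. 0 \<le> x powr - \<alpha> * h x"
        using eventually_ge_at_top[of 0] by eventually_elim (simp add: h_def)
      show "\<forall>\<^sub>F x in at_top. x powr - \<alpha> * h x \<le> x powr - (\<alpha> / 2)"
        using eventually_ge_at_top[of "max (real (M j)) 1"]
      proof eventually_elim
        case (elim x)
        have "real (M 0) \<le> real (M j)" using Mmono[of 0 j] by simp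
        then have x0: "\<not> x < real (M 0)" using elim by auto
        have "j \<le> K x" using Kge elim by auto
        then have "1 / (real (K x) + 2) \<le> 1 / (real j + 2)" by (simp add: frac_le)
        then have "x powr (1 / (real (K x) + 2)) \<le> x powr (\<alpha>/2)"
          using j elim by (intro powr_mono) auto
        then have "x powr - \<alpha> * h x \<le> x powr - \<alpha> * x powr (\<alpha>/2)"
          using x0 unfolding h_def by (intro mult_left_mono) auto
        also have "\<dots> = x powr - (\<alpha>/2)" by (simp add: powr_add[symmetric])
        finally show ?case .
      qed
    qed
  qed
  have cond: "g y \<ge> g x / h (real x)"
    if "1 \<le> x" "1 \<le> y" "real y < real x / h (real x)" "x + y \<notin> delta (\<epsilon> (real x)) g x"
    for x y :: nat
  proof (cases "real x < real (M 0)")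
    case True then show ?thesis using that(3) by (simp add: h_def)
  next
    case False
    let ?k = "K (real x)"
    let ?c = "1 / (real ?k + 2)"
    have hx: "h (real x) = real x powr ?c" using False by (simp add: h_def)
    have xpos: "0 < real x" using that(1) by simp
    have "real (M ?k) \<le> real x" using KM[of "real x"] False by linarith
    then have Mx: "M ?k \<le> x" by simp
    have "real x / h (real x) = real x powr (1 - ?c)"
      using xpos by (simp add: hx powr_diff)
    then have "g y \<ge> real x powr (- ?c) * g x"
      using PM[of ?k] Mx that unfolding P_def by auto
    also have "real x powr (- ?c) * g x = g x / h (real x)"
      using xpos by (simp add: hx powr_minus divide_inverse mult.commute)
    finally show ?thesis .
  qed
  show ?thesis using sub cond by blast
qed

theorem proposition20:
  fixes g :: "nat \<Rightarrow> real"
  assumes "in_G g"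
  shows "predictable g \<longleftrightarrow>
    (\<forall>\<epsilon>. subpoly \<epsilon> \<and> (\<forall>x>0. \<epsilon> x > 0) \<longrightarrow>
      (\<exists>h. subpoly h \<and>
        (\<forall>x::nat. \<forall>y::nat. 1 \<le> x \<and> 1 \<le> y \<and> real y < real x / h (real x) \<and>
           x + y \<notin> delta (\<epsilon> (real x)) g x
           \<longrightarrow> g y \<ge> g x / h (real x))))"
proof
  assume "predictable g"
  then show "\<forall>\<epsilon>. subpoly \<epsilon> \<and> (\<forall>x>0. \<epsilon> x > 0) \<longrightarrow>
      (\<exists>h. subpoly h \<and>
        (\<forall>x::nat. \<forall>y::nat. 1 \<le> x \<and> 1 \<le> y \<and> real y < real x / h (real x) \<and>
           x + y \<notin> delta (\<epsilon> (real x)) g x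
           \<longrightarrow> g y \<ge> g x / h (real x)))" using pred_dir by blast
next
  assume R: "\<forall>\<epsilon>. subpoly \<epsilon> \<and> (\<forall>x>0. \<epsilon> x > 0) \<longrightarrow>
      (\<exists>h. subpoly h \<and>
        (\<forall>x::nat. \<forall>y::nat. 1 \<le> x \<and> 1 \<le> y \<and> real y < real x / h (real x) \<and>
           x + y \<notin> delta (\<epsilon> (real x)) g x
           \<longrightarrow> g y \<ge> g x / h (real x)))"
  show "predictable g"
    unfolding predictable_def
  proof (intro allI impI)
    fix \<gamma> :: real and \<epsilon> :: "real \<Rightarrow> real"
    assume \<gamma>: "0 < \<gamma> \<and> \<gamma> < 1" and se: "subpoly \<epsilon>"
    have "filterlim (\<lambda>x. x powr 1 * \<epsilon> x) at_top at_top" using se zero_less_one unfolding subpoly_def by blast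
    then have "\<forall>\<^sub>F x in at_top. x powr 1 * \<epsilon> x > 0" by (simp add: filterlim_at_top_dense)
    then have "\<forall>\<^sub>F x in at_top. \<epsilon> x > 0"
      using eventually_gt_at_top[of 0]
      by eventually_elim (auto simp: zero_less_mult_iff)
    then obtain M where M: "\<And>x. x \<ge> M \<Longrightarrow> \<epsilon> x > 0" by (auto simp: eventually_at_top_linorder)
    define \<epsilon>' where "\<epsilon>' x = (if x \<ge> M then \<epsilon> x else 1)" for x
    have ev: "\<forall>\<^sub>F x in at_top. \<epsilon>' x = \<epsilon> x"
      using eventually_ge_at_top[of M] by eventually_elim (simp add: \<epsilon>'_def)
    have se': "subpoly \<epsilon>'"
      unfolding subpoly_def
    proof (intro conjI allI impI)
      fix x :: real assume "0 \<le> x" then show "0 \<le> \<epsilon>' x"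
        using se unfolding subpoly_def \<epsilon>'_def by auto
    next
      fix \<alpha> :: real assume a: "0 < \<alpha>"
      have e1: "\<forall>\<^sub>F x in at_top. x powr \<alpha> * \<epsilon> x = x powr \<alpha> * \<epsilon>' x"
        using ev by eventually_elim simp
      have e2: "\<forall>\<^sub>F x in at_top. x powr -\<alpha> * \<epsilon> x = x powr -\<alpha> * \<epsilon>' x"
        using ev by eventually_elim simp
      show "filterlim (\<lambda>x. x powr \<alpha> * \<epsilon>' x) at_top at_top"
        using filterlim_cong[OF refl refl e1] se a unfolding subpoly_def by blast
      show "((\<lambda>x. x powr - \<alpha> * \<epsilon>' x) \<longlongrightarrow> 0) at_top"
        using tendsto_cong[OF e2] se a unfolding subpoly_def by blast
    qed
    have pos': "\<forall>x>0. \<epsilon>' x > 0" using M by (simp add: \<epsilon>'_def)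
    obtain h where sh: "subpoly h" and H: "\<And>x y::nat. 1 \<le> x \<Longrightarrow> 1 \<le> y \<Longrightarrow> real y < real x / h (real x) \<Longrightarrow>
           x + y \<notin> delta (\<epsilon>' (real x)) g x \<Longrightarrow> g y \<ge> g x / h (real x)"
      using R se' pos' by blast
    have "filterlim (\<lambda>x. x powr 1 * h x) at_top at_top" using sh zero_less_one unfolding subpoly_def by blast
    then have "\<forall>\<^sub>F x in at_top. x powr 1 * h x > 0" by (simp add: filterlim_at_top_dense)
    then have e3: "\<forall>\<^sub>F x in at_top. h x > 0"
      using eventually_gt_at_top[of 0]
      by eventually_elim (auto simp: zero_less_mult_iff)
    have "((\<lambda>x. x powr -\<gamma> * h x) \<longlongrightarrow> 0) at_top" using sh \<gamma> unfolding subpoly_def by simp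
    then have e4: "\<forall>\<^sub>F x in at_top. x powr -\<gamma> * h x < 1"
      by (rule order_tendstoD) simp
    from e3 e4 have "\<forall>\<^sub>F x in at_top. h x > 0 \<and> x powr -\<gamma> * h x < 1" by eventually_elim simp
    then obtain B where B: "\<And>x. x \<ge> B \<Longrightarrow> h x > 0 \<and> x powr -\<gamma> * h x < 1"
      by (auto simp: eventually_at_top_linorder)
    define N where "N = nat \<lceil>max B (max M 1)\<rceil>"
    show "\<exists>N. \<forall>x\<ge>N. \<forall>y. 1 \<le> real y \<and> real y < real x powr (1 - \<gamma>) \<and>
            x + y \<notin> delta (\<epsilon> (real x)) g x \<longrightarrow> real x powr - \<gamma> * g x \<le> g y"
    proof (intro exI[of _ N] allI impI)
      fix x y :: nat
      assume xN: "N \<le> x" and hy: "1 \<le> real y \<and> real y < real x powr (1 - \<gamma>) \<and>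
            x + y \<notin> delta (\<epsilon> (real x)) g x"
      have "max B (max M 1) \<le> real x" using xN unfolding N_def by linarith
      then have xB: "B \<le> real x" and xM: "M \<le> real x" and x1: "1 \<le> real x" by auto
      have hp: "h (real x) > 0" and hl: "real x powr -\<gamma> * h (real x) < 1" using B[OF xB] by auto
      have xp: "0 < real x" using x1 by simp
      have pg: "0 < real x powr \<gamma>" using xp by simp
      have hlt: "h (real x) < real x powr \<gamma>"
        using hl pg by (simp add: powr_minus field_simps)
      have "real x powr (1 - \<gamma>) = real x / real x powr \<gamma>" using xp by (simp add: powr_diff)
      also have "\<dots> < real x / h (real x)" using hlt hp xp by (intro divide_strict_left_mono) auto
      finally have ylt: "real y < real x / h (real x)" using hy by linarith
      have "\<epsilon>' (real x) = \<epsilon> (real x)" using xM by (simp add: \<epsilon>'_def)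
      then have "g y \<ge> g x / h (real x)" using H[of x y] hy ylt x1 by auto
      moreover have gx: "g x > 0" using assms xp unfolding in_G_def by auto
      moreover have "real x powr -\<gamma> * g x \<le> g x / h (real x)"
      proof -
        have "real x powr -\<gamma> = 1 / real x powr \<gamma>" by (simp add: powr_minus divide_inverse)
        also have "\<dots> \<le> 1 / h (real x)" by (rule frac_le) (use hlt hp in linarith)+
        finally show ?thesis using gx by (simp add: divide_inverse mult.commute mult_left_mono)
      qed
      ultimately show "real x powr - \<gamma> * g x \<le> g y" by linarith
    qed
  qed
qed

end
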